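(* Let $n\ge2$, $j\ge0$, $b\in B$, $(\mu_i)_{i=1}^n\in\mathbb Z^n$ and $\mu=-\mu_1\Lambda_0+(\mu_1-\mu_2)\Lambda_1+\cdots+(\mu_{n-1}-\mu_n)\Lambda_{n-1}+2\mu_n\Lambda_n$. Then $$g_j(b,\mu)=\sum_\gamma q^{\frac12\sum_{i\in B,i\ne0}\gamma_i(\gamma_i-1)+\sum_{i\in B}H(b\otimes i)\gamma_i}\begin{bmatrix}j\\ \gamma\end{bmatrix}_q,$$ the sum over $\gamma=(\gamma_i)_{i\in B}\in\mathbb Z_{\ge0}^{2n+1}$ with $\gamma_i-\gamma_{\bar i}=\mu_i$ for $i=1,\dots,n$ and $\sum_{i\in B}\gamma_i=j$.
   Context: Affine algebra $A^{(2)}_{2n}$ with Dynkin nodes labeled so that the unique level-1 dominant weight is $\Lambda_n$; fundamental weights $\Lambda_0,\dots,\Lambda_n$, $P_{cl}=\bigoplus\mathbb Z\Lambda_i$. $B=\{1,\dots,n,0,\bar n,\dots,\bar1\}$ totally ordered by $1\prec\cdots\prec n\prec0\prec\bar n\prec\cdots\prec\bar1$. Weights: $wt(\bar b)=-wt(b)$, $wt(b)=\Lambda_b-\Lambda_{b-1}$ for $1\le b\le n-1$ (so $wt(1)=\Lambda_1-\Lambda_0$), $wt(n)=2\Lambda_n-\Lambda_{n-1}$, $wt(0)=0$. Energy function: $H(b\otimes b')=0$ if $b\prec b'$, $=1$ if $b\succeq b'$, except $H(0\otimes0)=0$. For $j\ge0$, $b\in B$, $\mu\in P_{cl}$: $g_j(b,\mu)=\sum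 q^{\sum_{i=1}^j iH(b_{i+1}\otimes b_i)}$, summed over $(b_j,\dots,b_1)\in B^j$ with $wt(b_j)+\cdots+wt(b_1)=\mu$, where $b_{j+1}=b$. For an integer vector $\gamma=(\gamma_b)_{b\in B}$: $\begin{bmatrix}j\\ \gamma\end{bmatrix}_q=(q)_j/\prod_{b\in B}(q)_{\gamma_b}$ if $\sum_b\gamma_b=j$ and all $\gamma_b\ge0$, and $0$ otherwise; $(q)_m=\prod_{i=1}^m(1-q^i)$. *)

theory Defs
  imports "HOL-Computational_Algebra.Formal_Power_Series"
begin

text \<open>Elements of the crystal B = {1,...,n,0,nbar,...,1bar} for A^(2)_(2n).\<close>
datatype bel = Pos nat | Zr | Bar nat

definition Bset :: "nat \<Rightarrow> bel set" where
  "Bset n = Pos ` {1..n} \<union> {Zr} \<union> Bar ` {1..n}"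

fun brank :: "nat \<Rightarrow> bel \<Rightarrow> nat" where
  "brank n (Pos i) = i"
| "brank n Zr = n + 1"
| "brank n (Bar i) = 2 * n + 2 - i"

definition bprec :: "nat \<Rightarrow> bel \<Rightarrow> bel \<Rightarrow> bool" where
  "bprec n b b' \<longleftrightarrow> brank n b < brank n b'"

definition Hen :: "nat \<Rightarrow> bel \<Rightarrow> bel \<Rightarrow> nat" where
  "Hen n b b' = (if b = Zr \<and> b' = Zr then 0 else if bprec n b b' then 0 else 1)"

text \<open>Classical weights: P_cl = \<Oplus> Z Lambda_i, i = 0..n, as functions nat => int (zero beyond n).\<close>
definition Lam :: "nat \<Rightarrow> nat \<Rightarrow> int" where
  "Lam k = (\<lambda>m. if m = k then 1 else 0)"

definition wtpos :: "nat \<Rightarrow> nat \<Rightarrow> nat \<Rightarrow> int" where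
  "wtpos n i = (\<lambda>m. if i = n then 2 * Lam n m - Lam (n - 1) m else Lam i m - Lam (i - 1) m)"

fun wt :: "nat \<Rightarrow> bel \<Rightarrow> nat \<Rightarrow> int" where
  "wt n (Pos i) = wtpos n i"
| "wt n Zr = (\<lambda>m. 0)"
| "wt n (Bar i) = (\<lambda>m. - wtpos n i m)"

text \<open>g_j(b,mu) as a formal power series in q = fps_X. A sequence (b_j,...,b_1)
  is a function c with c i = b_i for i in {1..j}; b_{j+1} = b.\<close>
definition gfun :: "nat \<Rightarrow> nat \<Rightarrow> bel \<Rightarrow> (nat \<Rightarrow> int) \<Rightarrow> rat fps" where
  "gfun n j b \<mu> =
     (\<Sum>c \<in> {c \<in> PiE {1..j} (\<lambda>_. Bset n). (\<lambda>m. \<Sum>i=1..j. wt n (c i) m) = \<mu>}.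
        fps_X ^ (\<Sum>i=1..j. i * Hen n (if i = j then b else c (i + 1)) (c i)))"

definition qpoch :: "nat \<Rightarrow> rat fps" where
  "qpoch m = (\<Prod>i=1..m. 1 - fps_X ^ i)"

definition qmultinom :: "nat \<Rightarrow> nat \<Rightarrow> (bel \<Rightarrow> nat) \<Rightarrow> rat fps" where
  "qmultinom n j \<gamma> =
     (if (\<Sum>b\<in>Bset n. \<gamma> b) = j then qpoch j / (\<Prod>b\<in>Bset n. qpoch (\<gamma> b)) else 0)"

end

theory Submission imports Defs begin

fun unrank :: "nat \<Rightarrow> nat \<Rightarrow> bel" where
  "unrank n k = (if k \<le> n then Pos k else if k = n + 1 then Zr else Bar (2 * n + 2 - k))"

lemma finite_Bset[simp]: "finite (Bset n)"
  by (simp add: Bset_def)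

lemma Zr_in[simp]: "Zr \<in> Bset n" by (simp add: Bset_def)

lemma unrank_brank: "x \<in> Bset n \<Longrightarrow> unrank n (brank n x) = x"
  by (auto simp: Bset_def)

lemma brank_range: "x \<in> Bset n \<Longrightarrow> brank n x \<in> {1..2*n+1}"
  by (auto simp: Bset_def)

lemma brank_unrank: "k \<in> {1..2*n+1} \<Longrightarrow> brank n (unrank n k) = k"
  by auto

lemma unrank_in: "k \<in> {1..2*n+1} \<Longrightarrow> unrank n k \<in> Bset n"
  by (auto simp: Bset_def image_iff)

declare unrank.simps[simp del]

lemma brank_inj: "x \<in> Bset n \<Longrightarrow> y \<in> Bset n \<Longrightarrow> brank n x = brank n y \<Longrightarrow> x = y"
  by (metis unrank_brank)

lemma bij_brank: "bij_betw (brank n) (Bset n) {1..2*n+1}"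
  apply (rule bij_betwI[where g="unrank n"])
  using brank_range unrank_in unrank_brank brank_unrank by blast+

lemma Hen_rank:
  assumes "x \<in> Bset n" "y \<in> Bset n"
  shows "Hen n x y = (if brank n y < brank n x then 1 else if y = x \<and> x \<noteq> Zr then 1 else 0)"
proof -
  have i: "brank n y = brank n x \<longleftrightarrow> y = x" using brank_inj[OF assms(2,1)] by blast
  show ?thesis unfolding Hen_def bprec_def
    by (cases "x = Zr"; cases "y = Zr") (use i in \<open>auto\<close>)
qed

abbreviation X :: "rat fps" where "X \<equiv> fps_X"

lemma tele1:
  fixes g :: "nat \<Rightarrow> nat"
  shows "(\<Sum>k=1..m. X ^ (\<Sum>i=1..<k. g i) * (1 - X ^ g k)) = 1 - X ^ (\<Sum>i=1..<Suc m. g i)"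
proof (induction m)
  case 0
  then show ?case by simp
next
  case (Suc m)
  have e: "(\<Sum>i=1..<Suc (Suc m). g i) = (\<Sum>i=1..<Suc m. g i) + g (Suc m)"
    by (simp add: sum.atLeastLessThan_Suc)
  have sp: "(\<Sum>k=1..Suc m. X ^ (\<Sum>i=1..<k. g i) * (1 - X ^ g k))
     = X ^ (\<Sum>i=1..<Suc m. g i) * (1 - X ^ g (Suc m)) + (\<Sum>k=1..m. X ^ (\<Sum>i=1..<k. g i) * (1 - X ^ g k))"
    by (rule sum.nat_ivl_Suc') simp
  show ?case
    unfolding sp Suc e power_add by (simp add: algebra_simps)
qed

lemma tele2:
  fixes g :: "nat \<Rightarrow> nat"
  assumes "r \<le> N"
  shows "(\<Sum>k=1..N. X ^ ((if k \<le> r then J else 0) + (\<Sum>i=1..<k. g i)) * (1 - X ^ g k))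
       = X ^ J * (1 - X ^ (\<Sum>i=1..<Suc r. g i)) + (X ^ (\<Sum>i=1..<Suc r. g i) - X ^ (\<Sum>i=1..<Suc N. g i))"
proof -
  have split: "{1..N} = {1..r} \<union> {Suc r..N}" using assms by auto
  have d: "{1..r} \<inter> {Suc r..N} = {}" by auto
  define h where "h k = X ^ (\<Sum>i=1..<k. g i) * (1 - X ^ g k)" for k
  have s1: "(\<Sum>k=1..N. X ^ ((if k \<le> r then J else 0) + (\<Sum>i=1..<k. g i)) * (1 - X ^ g k))
     = (\<Sum>k=1..r. X ^ J * h k) + (\<Sum>k=Suc r..N. h k)"
    unfolding split by (subst sum.union_disjoint) (auto simp: d h_def power_add mult.assoc intro!: sum.cong)
  have s2: "(\<Sum>k=1..N. h k) = (\<Sum>k=1..r. h k) + (\<Sum>k=Suc r..N. h k)"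
    unfolding split by (subst sum.union_disjoint) (auto simp: d)
  have t: "(\<Sum>k=1..m. h k) = 1 - X ^ (\<Sum>i=1..<Suc m. g i)" for m
    unfolding h_def by (rule tele1)
  have a1: "(\<Sum>k=Suc r..N. h k) = (\<Sum>k=1..N. h k) - (\<Sum>k=1..r. h k)"
    by (simp only: s2 add_diff_cancel_left')
  have a2: "(\<Sum>k=1..r. X ^ J * h k) = X ^ J * (\<Sum>k=1..r. h k)"
    by (rule sum_distrib_left[symmetric])
  show ?thesis unfolding s1 a1 a2 t by algebra
qed

definition Lw :: "nat \<Rightarrow> (bel \<Rightarrow> nat) \<Rightarrow> bel \<Rightarrow> nat" where
  "Lw n \<gamma> x = (\<Sum>y\<in>Bset n. if brank n y < brank n x then \<gamma> y else 0)"

lemma reidx: "(\<Sum>x\<in>Bset n. G (brank n x)) = (\<Sum>k=1..2*n+1. G k)"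
  using sum.reindex_bij_betw[OF bij_brank, of G n] by simp

lemma filt_sum: "m \<le> Suc N \<Longrightarrow> (\<Sum>k=1..N. if k < m then (g k::nat) else 0) = (\<Sum>k=1..<m. g k)"
proof -
  assume m: "m \<le> Suc N"
  have "{k\<in>{1..N}. k < m} = {1..<m}" using m by auto
  then show ?thesis by (simp add: sum.inter_filter[symmetric])
qed

lemma tele_B:
  assumes b: "b \<in> Bset n" and J: "J = (\<Sum>x\<in>Bset n. \<gamma> x)"
  shows "(\<Sum>x\<in>Bset n. X ^ (J * Hen n b x + Lw n \<gamma> x) * (1 - X ^ \<gamma> x))
        = X ^ (\<Sum>x\<in>Bset n. Hen n b x * \<gamma> x) * (1 - X ^ J)"
proof -
  define N where "N = 2*n+1"
  define g where "g k = \<gamma> (unrank n k)" for k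
  define r where "r = (if b = Zr then n else brank n b)"
  have rN: "r \<le> N" using brank_range[OF b] by (auto simp: r_def N_def)
  have gx: "\<gamma> x = g (brank n x)" if "x \<in> Bset n" for x
    using that by (simp add: g_def unrank_brank)
  have Hx: "Hen n b x = (if brank n x \<le> r then 1 else 0)" if "x \<in> Bset n" for x
    using Hen_rank[OF b that] brank_inj[OF that b] by (auto simp: r_def)
  have Lx: "Lw n \<gamma> x = (\<Sum>i=1..<brank n x. g i)" if "x \<in> Bset n" for x
  proof -
    have "Lw n \<gamma> x = (\<Sum>y\<in>Bset n. (\<lambda>k. if k < brank n x then g k else 0) (brank n y))"
      unfolding Lw_def by (rule sum.cong) (auto simp: gx)
    also have "\<dots> = (\<Sum>k=1..N. if k < brank n x then g k else 0)" unfolding N_def by (rule reidx)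
    also have "\<dots> = (\<Sum>i=1..<brank n x. g i)"
      using brank_range[OF that] by (intro filt_sum) (auto simp: N_def)
    finally show ?thesis .
  qed
  have JJ: "J = (\<Sum>i=1..<Suc N. g i)"
  proof -
    have "J = (\<Sum>x\<in>Bset n. g (brank n x))" unfolding J by (rule sum.cong) (auto simp: gx)
    also have "\<dots> = (\<Sum>k=1..N. g k)" unfolding N_def by (rule reidx)
    finally show ?thesis by (simp add: atLeastLessThanSuc_atLeastAtMost)
  qed
  have PP: "(\<Sum>x\<in>Bset n. Hen n b x * \<gamma> x) = (\<Sum>i=1..<Suc r. g i)"
  proof -
    have "(\<Sum>x\<in>Bset n. Hen n b x * \<gamma> x) = (\<Sum>x\<in>Bset n. (\<lambda>k. if k < Suc r then g k else 0) (brank n x))"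
      by (rule sum.cong) (auto simp: gx Hx)
    also have "\<dots> = (\<Sum>k=1..N. if k < Suc r then g k else 0)" unfolding N_def by (rule reidx)
    also have "\<dots> = (\<Sum>i=1..<Suc r. g i)" using rN by (intro filt_sum) auto
    finally show ?thesis .
  qed
  have "(\<Sum>x\<in>Bset n. X ^ (J * Hen n b x + Lw n \<gamma> x) * (1 - X ^ \<gamma> x))
     = (\<Sum>x\<in>Bset n. (\<lambda>k. X ^ ((if k \<le> r then J else 0) + (\<Sum>i=1..<k. g i)) * (1 - X ^ g k)) (brank n x))"
    by (rule sum.cong) (auto simp: gx Hx Lx)
  also have "\<dots> = (\<Sum>k=1..N. X ^ ((if k \<le> r then J else 0) + (\<Sum>i=1..<k. g i)) * (1 - X ^ g k))"
    unfolding N_def by (rule reidx)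
  also have "\<dots> = X ^ J * (1 - X ^ (\<Sum>i=1..<Suc r. g i)) + (X ^ (\<Sum>i=1..<Suc r. g i) - X ^ J)"
    using tele2[OF rN, of J g] JJ by simp
  also have "\<dots> = X ^ (\<Sum>i=1..<Suc r. g i) * (1 - X ^ J)" by algebra
  finally show ?thesis unfolding PP .
qed


definition Eg :: "nat \<Rightarrow> (bel \<Rightarrow> nat) \<Rightarrow> nat" where
  "Eg n \<gamma> = (\<Sum>i\<in>Bset n - {Zr}. \<gamma> i * (\<gamma> i - 1)) div 2"

definition Pb :: "nat \<Rightarrow> bel \<Rightarrow> (bel \<Rightarrow> nat) \<Rightarrow> nat" where
  "Pb n b \<gamma> = (\<Sum>i\<in>Bset n. Hen n b i * \<gamma> i)"

lemma Pb_rank: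
  assumes x: "x \<in> Bset n"
  shows "Pb n x \<delta> = Lw n \<delta> x + (if x = Zr then 0 else \<delta> x)"
proof -
  have "Pb n x \<delta> = (\<Sum>y\<in>Bset n. (if brank n y < brank n x then \<delta> y else 0) + (if y = x \<and> x \<noteq> Zr then \<delta> y else 0))"
    unfolding Pb_def by (rule sum.cong) (auto simp: Hen_rank[OF x])
  also have "\<dots> = Lw n \<delta> x + (\<Sum>y\<in>Bset n. if y = x \<and> x \<noteq> Zr then \<delta> y else 0)"
    by (simp add: sum.distrib Lw_def)
  also have "(\<Sum>y\<in>Bset n. if y = x \<and> x \<noteq> Zr then \<delta> y else 0) = (if x = Zr then 0 else \<delta> x)"
    using x by (cases "x = Zr") auto
  finally show ?thesis .
qed

lemma Lw_upd: "x \<in> Bset n \<Longrightarrow> Lw n (\<gamma>(x := v)) x = Lw n \<gamma> x"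
  unfolding Lw_def by (rule sum.cong) auto

lemma tri: "Suc m * (Suc m - 1) = m * (m - 1) + 2 * m"
  by (cases m) (auto simp: algebra_simps)

lemma Ex_upd:
  assumes x: "x \<in> Bset n" and g: "1 \<le> \<gamma> x"
  shows "Eg n \<gamma> = Eg n (\<gamma>(x := \<gamma> x - 1)) + (if x = Zr then 0 else \<gamma> x - 1)"
proof (cases "x = Zr")
  case True
  then have "Eg n \<gamma> = Eg n (\<gamma>(x := \<gamma> x - 1))" unfolding Eg_def
    by (intro arg_cong[where f="\<lambda>t. t div 2"] sum.cong) auto
  then show ?thesis using True by simp
next
  case False
  define f where "f \<delta> i = \<delta> i * (\<delta> i - 1)" for \<delta> :: "bel \<Rightarrow> nat" and i
  have xin: "x \<in> Bset n - {Zr}" using x False by simp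
  have s1: "(\<Sum>i\<in>Bset n - {Zr}. f \<gamma> i) = f \<gamma> x + (\<Sum>i\<in>Bset n - {Zr} - {x}. f \<gamma> i)"
    by (rule sum.remove[OF _ xin]) simp
  have s2: "(\<Sum>i\<in>Bset n - {Zr}. f (\<gamma>(x := \<gamma> x - 1)) i) = f (\<gamma>(x := \<gamma> x - 1)) x + (\<Sum>i\<in>Bset n - {Zr} - {x}. f (\<gamma>(x := \<gamma> x - 1)) i)"
    by (rule sum.remove[OF _ xin]) simp
  have s3: "(\<Sum>i\<in>Bset n - {Zr} - {x}. f (\<gamma>(x := \<gamma> x - 1)) i) = (\<Sum>i\<in>Bset n - {Zr} - {x}. f \<gamma> i)"
    by (rule sum.cong) (auto simp: f_def)
  obtain m where m: "\<gamma> x = Suc m" using g by (cases "\<gamma> x") auto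
  have fx: "f \<gamma> x = f (\<gamma>(x := \<gamma> x - 1)) x + 2 * (\<gamma> x - 1)"
    by (simp add: f_def m) (cases m; simp)
  have "(\<Sum>i\<in>Bset n - {Zr}. f \<gamma> i) = (\<Sum>i\<in>Bset n - {Zr}. f (\<gamma>(x := \<gamma> x - 1)) i) + 2 * (\<gamma> x - 1)"
    unfolding s1 s2 s3 fx by simp
  then show ?thesis using False unfolding Eg_def f_def by simp
qed

lemma exp_upd:
  assumes x: "x \<in> Bset n" and g: "1 \<le> \<gamma> x"
  shows "Eg n (\<gamma>(x := \<gamma> x - 1)) + Pb n x (\<gamma>(x := \<gamma> x - 1)) = Eg n \<gamma> + Lw n \<gamma> x"
  using Ex_upd[of x n \<gamma>, OF x g] Pb_rank[OF x, of "\<gamma>(x := \<gamma> x - 1)"] Lw_upd[OF x, of \<gamma>] g by auto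

lemma prod_nth0: "finite A \<Longrightarrow> fps_nth (\<Prod>x\<in>A. f x :: rat fps) 0 = (\<Prod>x\<in>A. fps_nth (f x) 0)"
  by (induction A rule: finite_induct) auto

lemma qpoch0: "fps_nth (qpoch m) 0 = 1"
  unfolding qpoch_def by (simp add: prod_nth0)

lemma qpoch_Suc: "qpoch (Suc m) = (1 - X ^ Suc m) * qpoch m"
  unfolding qpoch_def by (rule prod.nat_ivl_Suc') simp

definition Q :: "nat \<Rightarrow> (bel \<Rightarrow> nat) \<Rightarrow> rat fps" where
  "Q n \<gamma> = (\<Prod>b\<in>Bset n. qpoch (\<gamma> b))"

lemma Q0: "fps_nth (Q n \<gamma>) 0 = 1"
  unfolding Q_def by (simp add: prod_nth0 qpoch0)

lemma Q_nz: "Q n \<gamma> \<noteq> 0"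
  using Q0[of n \<gamma>] by auto

lemma qm_mult: "(\<Sum>b\<in>Bset n. \<gamma> b) = j \<Longrightarrow> qmultinom n j \<gamma> * Q n \<gamma> = qpoch j"
  unfolding qmultinom_def Q_def[symmetric]
  by (simp add: fps_times_divide_eq Q_nz subdegree_eq_0_iff Q0)

lemma Q_upd:
  assumes x: "x \<in> Bset n" and g: "1 \<le> \<gamma> x"
  shows "Q n \<gamma> = (1 - X ^ \<gamma> x) * Q n (\<gamma>(x := \<gamma> x - 1))"
proof -
  have a: "Q n \<gamma> = qpoch (\<gamma> x) * (\<Prod>b\<in>Bset n - {x}. qpoch (\<gamma> b))"
    unfolding Q_def by (rule prod.remove[OF _ x]) simp
  have b: "Q n (\<gamma>(x := \<gamma> x - 1)) = qpoch (\<gamma> x - 1) * (\<Prod>b\<in>Bset n - {x}. qpoch (\<gamma> b))"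
    unfolding Q_def by (subst prod.remove[OF _ x]) (auto intro!: prod.cong)
  obtain m where m: "\<gamma> x = Suc m" using g by (cases "\<gamma> x") auto
  have c: "qpoch (\<gamma> x) = (1 - X ^ \<gamma> x) * qpoch (\<gamma> x - 1)" using m qpoch_Suc by simp
  show ?thesis by (simp only: a b c mult.assoc)
qed

lemma qm_rec:
  assumes x: "x \<in> Bset n" and g: "1 \<le> \<gamma> x" and s: "(\<Sum>b\<in>Bset n. \<gamma> b) = Suc j"
  shows "(1 - X ^ Suc j) * qmultinom n j (\<gamma>(x := \<gamma> x - 1)) = (1 - X ^ \<gamma> x) * qmultinom n (Suc j) \<gamma>"
proof -
  have s': "(\<Sum>b\<in>Bset n. (\<gamma>(x := \<gamma> x - 1)) b) = j"
  proof -
    have "(\<Sum>b\<in>Bset n. \<gamma> b) = \<gamma> x + (\<Sum>b\<in>Bset n - {x}. \<gamma> b)" by (rule sum.remove[OF _ x]) simp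
    moreover have "(\<Sum>b\<in>Bset n. (\<gamma>(x := \<gamma> x - 1)) b) = (\<gamma> x - 1) + (\<Sum>b\<in>Bset n - {x}. \<gamma> b)"
      by (subst sum.remove[OF _ x]) (auto intro!: sum.cong)
    ultimately show ?thesis using s g by simp
  qed
  let ?g = "\<gamma>(x := \<gamma> x - 1)"
  have "(1 - X ^ Suc j) * qmultinom n j ?g * Q n \<gamma>
      = (1 - X ^ \<gamma> x) * ((1 - X ^ Suc j) * (qmultinom n j ?g * Q n ?g))"
    unfolding Q_upd[of x n \<gamma>, OF x g] by (simp add: algebra_simps)
  also have "\<dots> = (1 - X ^ \<gamma> x) * qpoch (Suc j)"
    by (simp only: qm_mult[OF s'] qpoch_Suc)
  also have "\<dots> = (1 - X ^ \<gamma> x) * qmultinom n (Suc j) \<gamma> * Q n \<gamma>"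
    by (simp add: qm_mult[OF s] mult.assoc)
  finally show ?thesis using Q_nz by (simp add: mult_right_cancel)
qed


definition W :: "nat \<Rightarrow> nat \<Rightarrow> (nat \<Rightarrow> bel) set" where
  "W n j = PiE {1..j} (\<lambda>_. Bset n)"

definition Sst :: "nat \<Rightarrow> nat \<Rightarrow> bel \<Rightarrow> (nat \<Rightarrow> bel) \<Rightarrow> nat" where
  "Sst n j b c = (\<Sum>i=1..j. i * Hen n (if i = j then b else c (i + 1)) (c i))"

definition cnt :: "nat \<Rightarrow> nat \<Rightarrow> (nat \<Rightarrow> bel) \<Rightarrow> bel \<Rightarrow> nat" where
  "cnt n j c = restrict (\<lambda>x. card {i\<in>{1..j}. c i = x}) (Bset n)"

definition Fq :: "nat \<Rightarrow> nat \<Rightarrow> bel \<Rightarrow> (bel \<Rightarrow> nat) \<Rightarrow> rat fps" where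
  "Fq n j b \<gamma> = (\<Sum>c\<in>W n j. if cnt n j c = \<gamma> then X ^ Sst n j b c else 0)"

lemma finite_W[simp]: "finite (W n j)"
  unfolding W_def by (simp add: finite_PiE)

lemma word_split:
  "(\<Sum>c\<in>W n (Suc j). h c) = (\<Sum>x\<in>Bset n. \<Sum>c\<in>W n j. h (c(Suc j := x)))"
proof -
  have i: "{1..Suc j} = insert (Suc j) {1..j}" by auto
  have e: "W n (Suc j) = (\<lambda>(y, g). g(Suc j := y)) ` (Bset n \<times> W n j)"
    unfolding W_def i by (rule PiE_insert_eq)
  have inj: "inj_on (\<lambda>(y, g). g(Suc j := y)) (Bset n \<times> W n j)"
    unfolding W_def by (rule inj_combinator) simp
  have "(\<Sum>c\<in>W n (Suc j). h c) = (\<Sum>p\<in>Bset n \<times> W n j. h ((\<lambda>(y, g). g(Suc j := y)) p))"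
    unfolding e by (rule sum.reindex[OF inj, unfolded comp_def])
  also have "\<dots> = (\<Sum>x\<in>Bset n. \<Sum>c\<in>W n j. h (c(Suc j := x)))"
    by (subst sum.cartesian_product) (simp add: case_prod_beta)
  finally show ?thesis .
qed

lemma Sst_upd:
  assumes c: "c \<in> W n j"
  shows "Sst n (Suc j) b (c(Suc j := x)) = Suc j * Hen n b x + Sst n j x c"
proof -
  have "Sst n (Suc j) b (c(Suc j := x)) = Suc j * Hen n b x +
     (\<Sum>i=1..j. i * Hen n (if i = Suc j then b else (c(Suc j := x)) (i + 1)) ((c(Suc j := x)) i))"
    unfolding Sst_def by (subst sum.nat_ivl_Suc') simp_all
  also have "(\<Sum>i=1..j. i * Hen n (if i = Suc j then b else (c(Suc j := x)) (i + 1)) ((c(Suc j := x)) i))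
     = Sst n j x c"
    unfolding Sst_def by (rule sum.cong) auto
  finally show ?thesis .
qed

lemma cnt_upd:
  assumes c: "c \<in> W n j" and x: "x \<in> Bset n"
  shows "cnt n (Suc j) (c(Suc j := x)) = (cnt n j c)(x := cnt n j c x + 1)"
proof
  fix y
  show "cnt n (Suc j) (c(Suc j := x)) y = ((cnt n j c)(x := cnt n j c x + 1)) y"
  proof (cases "y \<in> Bset n")
    case False
    then have "y \<noteq> x" using x by auto
    then show ?thesis using False by (simp add: cnt_def)
  next
    case True
    have "{i\<in>{1..Suc j}. (c(Suc j := x)) i = y} = (if x = y then insert (Suc j) {i\<in>{1..j}. c i = y} else {i\<in>{1..j}. c i = y})"
      by auto
    moreover have "Suc j \<notin> {i\<in>{1..j}. c i = y}" by simp
    ultimately have "card {i\<in>{1..Suc j}. (c(Suc j := x)) i = y} = card {i\<in>{1..j}. c i = y} + (if x = y then 1 else 0)"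
      by simp
    then show ?thesis using True x by (auto simp: cnt_def)
  qed
qed

lemma cnt_eq:
  assumes c: "c \<in> W n j" and x: "x \<in> Bset n"
  shows "(cnt n (Suc j) (c(Suc j := x)) = \<gamma>) \<longleftrightarrow> (1 \<le> \<gamma> x \<and> cnt n j c = \<gamma>(x := \<gamma> x - 1))"
  unfolding cnt_upd[OF c x]
proof
  assume h: "(cnt n j c)(x := cnt n j c x + 1) = \<gamma>"
  then have gx: "\<gamma> x = cnt n j c x + 1" by auto
  show "1 \<le> \<gamma> x \<and> cnt n j c = \<gamma>(x := \<gamma> x - 1)"
    using h gx by auto
next
  assume h: "1 \<le> \<gamma> x \<and> cnt n j c = \<gamma>(x := \<gamma> x - 1)"
  then show "(cnt n j c)(x := cnt n j c x + 1) = \<gamma>" by auto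
qed

lemma sum_upd:
  assumes x: "x \<in> Bset n" and g: "1 \<le> \<gamma> x" and s: "(\<Sum>b\<in>Bset n. \<gamma> b) = Suc j"
  shows "(\<Sum>b\<in>Bset n. (\<gamma>(x := \<gamma> x - 1)) b) = j"
proof -
  have "(\<Sum>b\<in>Bset n. \<gamma> b) = \<gamma> x + (\<Sum>b\<in>Bset n - {x}. \<gamma> b)" by (rule sum.remove[OF _ x]) simp
  moreover have "(\<Sum>b\<in>Bset n. (\<gamma>(x := \<gamma> x - 1)) b) = (\<gamma> x - 1) + (\<Sum>b\<in>Bset n - {x}. \<gamma> b)"
    by (subst sum.remove[OF _ x]) (auto intro!: sum.cong)
  ultimately show ?thesis using s g by simp
qed

lemma Fq_step:
  "Fq n (Suc j) b \<gamma> = (\<Sum>x\<in>Bset n. if 1 \<le> \<gamma> x then X ^ (Suc j * Hen n b x) * Fq n j x (\<gamma>(x := \<gamma> x - 1)) else 0)"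
proof -
  have "Fq n (Suc j) b \<gamma> = (\<Sum>x\<in>Bset n. \<Sum>c\<in>W n j.
      if cnt n (Suc j) (c(Suc j := x)) = \<gamma> then X ^ Sst n (Suc j) b (c(Suc j := x)) else 0)"
    unfolding Fq_def by (rule word_split)
  also have "\<dots> = (\<Sum>x\<in>Bset n. if 1 \<le> \<gamma> x then X ^ (Suc j * Hen n b x) * Fq n j x (\<gamma>(x := \<gamma> x - 1)) else 0)"
  proof (rule sum.cong[OF refl])
    fix x assume x: "x \<in> Bset n"
    have "(\<Sum>c\<in>W n j. if cnt n (Suc j) (c(Suc j := x)) = \<gamma> then X ^ Sst n (Suc j) b (c(Suc j := x)) else 0)
        = (\<Sum>c\<in>W n j. if 1 \<le> \<gamma> x then X ^ (Suc j * Hen n b x) * (if cnt n j c = \<gamma>(x := \<gamma> x - 1) then X ^ Sst n j x c else 0) else 0)"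
      by (rule sum.cong[OF refl]) (auto simp: cnt_eq[OF _ x] Sst_upd power_add)
    also have "\<dots> = (if 1 \<le> \<gamma> x then X ^ (Suc j * Hen n b x) * Fq n j x (\<gamma>(x := \<gamma> x - 1)) else 0)"
      by (simp add: Fq_def sum_distrib_left)
    finally show "(\<Sum>c\<in>W n j. if cnt n (Suc j) (c(Suc j := x)) = \<gamma> then X ^ Sst n (Suc j) b (c(Suc j := x)) else 0)
        = (if 1 \<le> \<gamma> x then X ^ (Suc j * Hen n b x) * Fq n j x (\<gamma>(x := \<gamma> x - 1)) else 0)" .
  qed
  finally show ?thesis .
qed

lemma one_minus_nz: "(1 - X ^ Suc j) \<noteq> 0"
proof
  assume "(1 - X ^ Suc j) = 0"
  then have "fps_nth (1 - X ^ Suc j) 0 = 0" by simp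
  then show False by simp
qed

lemma main:
  "b \<in> Bset n \<Longrightarrow> \<gamma> \<in> PiE (Bset n) (\<lambda>_. UNIV) \<Longrightarrow> (\<Sum>x\<in>Bset n. \<gamma> x) = j \<Longrightarrow>
   Fq n j b \<gamma> = X ^ (Eg n \<gamma> + Pb n b \<gamma>) * qmultinom n j \<gamma>"
proof (induction j arbitrary: b \<gamma>)
  case 0
  have z: "\<forall>x\<in>Bset n. \<gamma> x = 0" using 0(3) by simp
  have g: "\<gamma> = restrict (\<lambda>_. 0) (Bset n)"
    using z 0(2) by (auto simp: PiE_def extensional_def restrict_def)
  have w: "W n 0 = {\<lambda>_. undefined}" unfolding W_def by simp
  have c0: "cnt n 0 (\<lambda>_. undefined) = restrict (\<lambda>_. 0) (Bset n)" unfolding cnt_def by simp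
  show ?case unfolding g Fq_def w
    by (simp add: c0 Sst_def Eg_def Pb_def qmultinom_def qpoch_def)
next
  case (Suc j)
  note b = Suc.prems(1) and gP = Suc.prems(2) and s = Suc.prems(3)
  have pt: "(1 - X ^ Suc j) * (if 1 \<le> \<gamma> x then X ^ (Suc j * Hen n b x) * Fq n j x (\<gamma>(x := \<gamma> x - 1)) else 0)
     = X ^ (Suc j * Hen n b x + Lw n \<gamma> x) * (1 - X ^ \<gamma> x) * (X ^ Eg n \<gamma> * qmultinom n (Suc j) \<gamma>)"
    if x: "x \<in> Bset n" for x
  proof (cases "1 \<le> \<gamma> x")
    case False
    then have z: "\<gamma> x = 0" by simp
    show ?thesis unfolding z using False by simp
  next
    case True
    have gP': "\<gamma>(x := \<gamma> x - 1) \<in> PiE (Bset n) (\<lambda>_. UNIV)" using gP x by (auto simp: PiE_def extensional_def)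
    have IH: "Fq n j x (\<gamma>(x := \<gamma> x - 1)) = X ^ (Eg n \<gamma> + Lw n \<gamma> x) * qmultinom n j (\<gamma>(x := \<gamma> x - 1))"
      using Suc.IH[OF x gP' sum_upd[of x n \<gamma>, OF x True s]] unfolding exp_upd[of x n \<gamma>, OF x True] .
    have r: "(1 - X ^ Suc j) * qmultinom n j (\<gamma>(x := \<gamma> x - 1)) = (1 - X ^ \<gamma> x) * qmultinom n (Suc j) \<gamma>"
      by (rule qm_rec[of x n \<gamma>, OF x True s])
    have "(1 - X ^ Suc j) * (X ^ (Suc j * Hen n b x) * Fq n j x (\<gamma>(x := \<gamma> x - 1)))
       = X ^ (Suc j * Hen n b x) * X ^ (Eg n \<gamma> + Lw n \<gamma> x) * ((1 - X ^ Suc j) * qmultinom n j (\<gamma>(x := \<gamma> x - 1)))"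
      unfolding IH by (simp only: ac_simps)
    also have "\<dots> = X ^ (Suc j * Hen n b x) * X ^ (Eg n \<gamma> + Lw n \<gamma> x) * ((1 - X ^ \<gamma> x) * qmultinom n (Suc j) \<gamma>)"
      unfolding r ..
    also have "\<dots> = X ^ (Suc j * Hen n b x + Lw n \<gamma> x) * (1 - X ^ \<gamma> x) * (X ^ Eg n \<gamma> * qmultinom n (Suc j) \<gamma>)"
      by (simp only: power_add ac_simps)
    finally show ?thesis using True by simp
  qed
  have "(1 - X ^ Suc j) * Fq n (Suc j) b \<gamma>
      = (\<Sum>x\<in>Bset n. X ^ (Suc j * Hen n b x + Lw n \<gamma> x) * (1 - X ^ \<gamma> x) * (X ^ Eg n \<gamma> * qmultinom n (Suc j) \<gamma>))"
    unfolding Fq_step sum_distrib_left by (rule sum.cong[OF refl]) (rule pt)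
  also have "\<dots> = (\<Sum>x\<in>Bset n. X ^ (Suc j * Hen n b x + Lw n \<gamma> x) * (1 - X ^ \<gamma> x)) * (X ^ Eg n \<gamma> * qmultinom n (Suc j) \<gamma>)"
    by (rule sum_distrib_right[symmetric])
  also have "\<dots> = X ^ Pb n b \<gamma> * (1 - X ^ Suc j) * (X ^ Eg n \<gamma> * qmultinom n (Suc j) \<gamma>)"
    using tele_B[OF b s[symmetric]] unfolding Pb_def by simp
  also have "\<dots> = (1 - X ^ Suc j) * (X ^ (Eg n \<gamma> + Pb n b \<gamma>) * qmultinom n (Suc j) \<gamma>)"
    by (simp only: power_add ac_simps)
  finally have "(1 - X ^ Suc j) * Fq n (Suc j) b \<gamma> = (1 - X ^ Suc j) * (X ^ (Eg n \<gamma> + Pb n b \<gamma>) * qmultinom n (Suc j) \<gamma>)" .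
  then show ?case using one_minus_nz[of j] by (rule mult_left_cancel[THEN iffD1, rotated])
qed


definition muof :: "nat \<Rightarrow> (nat \<Rightarrow> int) \<Rightarrow> nat \<Rightarrow> int" where
  "muof n D = (\<lambda>k. if k = 0 then - D 1 else if k < n then D k - D (k + 1) else if k = n then 2 * D n else 0)"

lemma cnt_in: "cnt n j c \<in> PiE (Bset n) (\<lambda>_. UNIV)"
  unfolding cnt_def by simp

lemma cnt_sum: assumes c: "c \<in> W n j" shows "(\<Sum>x\<in>Bset n. cnt n j c x) = j"
proof -
  have im: "c ` {1..j} \<subseteq> Bset n" using c by (auto simp: W_def)
  have "(\<Sum>x\<in>Bset n. cnt n j c x) = (\<Sum>x\<in>Bset n. \<Sum>i\<in>{i\<in>{1..j}. c i = x}. (1::nat))"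
    by (rule sum.cong) (auto simp: cnt_def)
  also have "\<dots> = (\<Sum>i\<in>{1..j}. (1::nat))"
    by (rule sum.group[OF _ _ im]) auto
  finally show ?thesis by simp
qed

lemma wsum: assumes c: "c \<in> W n j"
  shows "(\<Sum>i=1..j. wt n (c i) m) = (\<Sum>x\<in>Bset n. int (cnt n j c x) * wt n x m)"
proof -
  have im: "c ` {1..j} \<subseteq> Bset n" using c by (auto simp: W_def)
  have "(\<Sum>i=1..j. wt n (c i) m) = (\<Sum>x\<in>Bset n. \<Sum>i\<in>{i\<in>{1..j}. c i = x}. wt n (c i) m)"
    by (rule sum.group[OF _ _ im, symmetric]) auto
  also have "\<dots> = (\<Sum>x\<in>Bset n. \<Sum>i\<in>{i\<in>{1..j}. c i = x}. wt n x m)"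
    by (rule sum.cong[OF refl], rule sum.cong) auto
  also have "\<dots> = (\<Sum>x\<in>Bset n. int (cnt n j c x) * wt n x m)"
    by (rule sum.cong) (auto simp: cnt_def)
  finally show ?thesis .
qed

lemma Bset_sum: "(\<Sum>x\<in>Bset n. f x :: int) = (\<Sum>i=1..n. f (Pos i)) + f Zr + (\<Sum>i=1..n. f (Bar i))"
proof -
  have e: "Bset n = Pos ` {1..n} \<union> ({Zr} \<union> Bar ` {1..n})" unfolding Bset_def by auto
  have "(\<Sum>x\<in>Bset n. f x) = (\<Sum>x\<in>Pos ` {1..n}. f x) + ((\<Sum>x\<in>{Zr}. f x) + (\<Sum>x\<in>Bar ` {1..n}. f x))"
  proof -
    have d1: "Pos ` {1..n} \<inter> ({Zr} \<union> Bar ` {1..n}) = {}" by auto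
    have d2: "{Zr} \<inter> Bar ` {1..n} = {}" by auto
    have "sum f (Pos ` {1..n} \<union> ({Zr} \<union> Bar ` {1..n})) = sum f (Pos ` {1..n}) + sum f ({Zr} \<union> Bar ` {1..n})"
      by (rule sum.union_disjoint[OF _ _ d1]) auto
    also have "sum f ({Zr} \<union> Bar ` {1..n}) = sum f {Zr} + sum f (Bar ` {1..n})"
      by (rule sum.union_disjoint[OF _ _ d2]) auto
    finally show ?thesis unfolding e .
  qed
  also have "(\<Sum>x\<in>Pos ` {1..n}. f x) = (\<Sum>i=1..n. f (Pos i))"
    by (subst sum.reindex) (auto simp: inj_on_def)
  also have "(\<Sum>x\<in>Bar ` {1..n}. f x) = (\<Sum>i=1..n. f (Bar i))"
    by (subst sum.reindex) (auto simp: inj_on_def)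
  finally show ?thesis by simp
qed

lemma wcalc:
  assumes n: "n \<ge> 2"
  shows "(\<Sum>i=1..n. D i * wtpos n i m) = muof n D m"
proof -
  obtain k where k: "n = Suc k" and k1: "k \<ge> 1" using n by (cases n) auto
  have s: "(\<Sum>i=1..n. D i * wtpos n i m) = D n * wtpos n n m + (\<Sum>i=1..k. D i * wtpos n i m)"
    unfolding k by (rule sum.nat_ivl_Suc') simp
  have t: "(\<Sum>i=1..k. D i * wtpos n i m) = (\<Sum>i=1..k. (if i = m then D i else 0) - (if i = m + 1 then D i else 0))"
    by (rule sum.cong) (auto simp: wtpos_def Lam_def k)
  have u: "(\<Sum>i=1..k. (if i = m then D i else 0) - (if i = m + 1 then D i else 0))
     = (if m \<in> {1..k} then D m else 0) - (if m + 1 \<in> {1..k} then D (m + 1) else 0)"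
    by (simp add: sum_subtractf sum.delta')
  have v: "D n * wtpos n n m = D n * (2 * (if m = n then 1 else 0) - (if m = k then 1 else 0))"
    by (simp add: wtpos_def Lam_def k)
  show ?thesis unfolding s t u v muof_def using k1 k by auto
qed

lemma muof_inj:
  assumes n: "n \<ge> 2"
  shows "muof n D = muof n E \<longleftrightarrow> (\<forall>i\<in>{1..n}. D i = E i)"
proof
  assume h: "muof n D = muof n E"
  have "1 \<le> i \<longrightarrow> i \<le> n \<longrightarrow> D i = E i" for i
  proof (induction i)
    case 0
    then show ?case by simp
  next
    case (Suc i)
    show ?case
    proof (cases "i = 0")
      case True
      have "muof n D 0 = muof n E 0" using h by simp
      then show ?thesis using True by (simp add: muof_def)
    next
      case False
      show ?thesis
      proof (intro impI)
        assume "Suc i \<le> n"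
        then have "i < n" by simp
        have "muof n D i = muof n E i" using h by simp
        then have "D i - D (i + 1) = E i - E (i + 1)" using False \<open>i < n\<close> by (simp add: muof_def)
        moreover have "D i = E i" using Suc.IH False \<open>i < n\<close> by simp
        ultimately show "D (Suc i) = E (Suc i)" by simp
      qed
    qed
  qed
  then show "\<forall>i\<in>{1..n}. D i = E i" by auto
next
  assume h: "\<forall>i\<in>{1..n}. D i = E i"
  show "muof n D = muof n E"
  proof
    fix m
    show "muof n D m = muof n E m"
      using h n unfolding muof_def by (cases "m = 0") auto
  qed
qed

lemma weight_iff:
  assumes n: "n \<ge> 2" and c: "c \<in> W n j"
  shows "((\<lambda>m. \<Sum>i=1..j. wt n (c i) m) = muof n \<mu>s) \<longleftrightarrow>
         (\<forall>i\<in>{1..n}. int (cnt n j c (Pos i)) - int (cnt n j c (Bar i)) = \<mu>s i)"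
proof -
  define D where "D i = int (cnt n j c (Pos i)) - int (cnt n j c (Bar i))" for i
  have "(\<lambda>m. \<Sum>i=1..j. wt n (c i) m) = (\<lambda>m. \<Sum>i=1..n. D i * wtpos n i m)"
  proof
    fix m
    have "(\<Sum>i=1..j. wt n (c i) m) = (\<Sum>x\<in>Bset n. int (cnt n j c x) * wt n x m)" by (rule wsum[OF c])
    also have "\<dots> = (\<Sum>i=1..n. D i * wtpos n i m)"
      unfolding Bset_sum by (simp add: D_def sum.distrib[symmetric] algebra_simps sum_subtractf[symmetric])
    finally show "(\<Sum>i=1..j. wt n (c i) m) = (\<Sum>i=1..n. D i * wtpos n i m)" .
  qed
  also have "\<dots> = muof n D" using wcalc[OF n] by auto
  finally show ?thesis using muof_inj[OF n] by (simp add: D_def)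
qed

theorem mainTheorem16:
  fixes n j :: nat and b :: bel and \<mu>s :: "nat \<Rightarrow> int" and \<mu> :: "nat \<Rightarrow> int"
  assumes "n \<ge> 2" and "b \<in> Bset n"
    and "\<mu> = (\<lambda>k. if k = 0 then - \<mu>s 1
                  else if k < n then \<mu>s k - \<mu>s (k + 1)
                  else if k = n then 2 * \<mu>s n else 0)"
  shows "gfun n j b \<mu> =
    (\<Sum>\<gamma> \<in> {\<gamma> \<in> Bset n \<rightarrow>\<^sub>E (UNIV :: nat set).
              (\<forall>i\<in>{1..n}. int (\<gamma> (Pos i)) - int (\<gamma> (Bar i)) = \<mu>s i)
              \<and> (\<Sum>i\<in>Bset n. \<gamma> i) = j}.
       fps_X ^ ((\<Sum>i\<in>Bset n - {Zr}. \<gamma> i * (\<gamma> i - 1)) div 2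
                + (\<Sum>i\<in>Bset n. Hen n b i * \<gamma> i))
       * qmultinom n j \<gamma>)"
proof -
  define T where "T = {\<gamma> \<in> Bset n \<rightarrow>\<^sub>E (UNIV :: nat set).
              (\<forall>i\<in>{1..n}. int (\<gamma> (Pos i)) - int (\<gamma> (Bar i)) = \<mu>s i)
              \<and> (\<Sum>i\<in>Bset n. \<gamma> i) = j}"
  have mu: "\<mu> = muof n \<mu>s" using assms(3) by (simp add: muof_def)
  have finT: "finite T"
  proof (rule finite_subset)
    show "T \<subseteq> PiE (Bset n) (\<lambda>_. {0..j})"
    proof
      fix \<gamma> assume g: "\<gamma> \<in> T"
      have "\<gamma> x \<le> j" if "x \<in> Bset n" for x
        using g that member_le_sum[of x "Bset n" \<gamma>] by (auto simp: T_def)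
      then show "\<gamma> \<in> PiE (Bset n) (\<lambda>_. {0..j})" using g by (auto simp: T_def PiE_def Pi_def)
    qed
    show "finite (PiE (Bset n) (\<lambda>_. {0..j}))" by (simp add: finite_PiE)
  qed
  have L: "gfun n j b \<mu> = (\<Sum>c\<in>W n j. if (\<lambda>m. \<Sum>i=1..j. wt n (c i) m) = \<mu> then X ^ Sst n j b c else 0)"
    unfolding gfun_def W_def Sst_def by (rule sum.inter_filter) (simp add: finite_PiE)
  have "(\<Sum>\<gamma>\<in>T. fps_X ^ ((\<Sum>i\<in>Bset n - {Zr}. \<gamma> i * (\<gamma> i - 1)) div 2
                + (\<Sum>i\<in>Bset n. Hen n b i * \<gamma> i)) * qmultinom n j \<gamma>)
      = (\<Sum>\<gamma>\<in>T. Fq n j b \<gamma>)"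
  proof (rule sum.cong[OF refl])
    fix \<gamma> assume g: "\<gamma> \<in> T"
    show "fps_X ^ ((\<Sum>i\<in>Bset n - {Zr}. \<gamma> i * (\<gamma> i - 1)) div 2
                + (\<Sum>i\<in>Bset n. Hen n b i * \<gamma> i)) * qmultinom n j \<gamma> = Fq n j b \<gamma>"
      using main[OF assms(2), of \<gamma> j] g unfolding Eg_def Pb_def T_def by simp
  qed
  also have "\<dots> = (\<Sum>c\<in>W n j. \<Sum>\<gamma>\<in>T. if cnt n j c = \<gamma> then X ^ Sst n j b c else 0)"
    unfolding Fq_def by (rule sum.swap)
  also have "\<dots> = (\<Sum>c\<in>W n j. if cnt n j c \<in> T then X ^ Sst n j b c else 0)"
    using finT by (simp add: sum.delta)
  also have "\<dots> = (\<Sum>c\<in>W n j. if (\<lambda>m. \<Sum>i=1..j. wt n (c i) m) = \<mu> then X ^ Sst n j b c else 0)"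
  proof (rule sum.cong[OF refl])
    fix c assume c: "c \<in> W n j"
    have "cnt n j c \<in> T \<longleftrightarrow> (\<lambda>m. \<Sum>i=1..j. wt n (c i) m) = \<mu>"
      unfolding mu weight_iff[OF assms(1) c] T_def using cnt_in[of n j c] cnt_sum[OF c] by auto
    then show "(if cnt n j c \<in> T then X ^ Sst n j b c else 0) =
      (if (\<lambda>m. \<Sum>i=1..j. wt n (c i) m) = \<mu> then X ^ Sst n j b c else 0)" by simp
  qed
  finally show ?thesis unfolding L T_def by (rule sym)
qed

end
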